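(* Let $q=2^m\geq 4$ with $m$ a positive integer, let $b\in\mathbb{F}_q^*$ and $\delta\in\mathbb{F}_{q^2}\setminus\mathbb{F}_q$. Put $$B=b^4\delta^{q+1}\mathrm{Tr}_{q^2/q}(\delta),\quad C=b^4\mathrm{Tr}_{q^2/q}(\delta),\quad D=b^4\mathrm{Tr}_{q^2/q}(\delta)^2,$$ and define $S_{-1}=0$, $S_0=1$, $S_i=C^{2^{i-1}}S_{i-1}+D^{2^{i-1}}S_{i-2}$ for $i\geq1$. If the polynomial $$P(x)=b(x^q+x+\delta)^{q(2q+1)/4}+x$$ permutes $\mathbb{F}_{q^2}$, then its compositional inverse over $\mathbb{F}_{q^2}$ is $$P^{-1}(x)=x+b\left(\delta+\sum_{i=0}^{m-1}\left(S_{m-2-i}^{2^{i+1}}+D^{1-2^{i+1}}S_i\right)\left(x^{4q}+x^4+B\right)^{2^i}\right)^{q(2q+1)/4}.$$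
   Context: $\mathrm{Tr}_{q^2/q}(y)=y+y^q$. The compositional inverse of a permutation polynomial $f$ of $\mathbb{F}_{Q}$ is the unique polynomial $f^{-1}$ (modulo $x^Q-x$) with $f(f^{-1}(c))=f^{-1}(f(c))=c$ for all $c\in\mathbb{F}_Q$. *)

theory Defs
  imports Main
begin

definition Tr :: "nat \<Rightarrow> 'a::field \<Rightarrow> 'a" where
  "Tr q y = y + y ^ q"

text \<open>Shifted sequence: Ssh C D k = S_(k-1), so Ssh C D 0 = S_(-1) = 0,
  Ssh C D 1 = S_0 = 1, and S_i = C^(2^(i-1)) S_(i-1) + D^(2^(i-1)) S_(i-2).\<close>
fun Ssh :: "'a::field \<Rightarrow> 'a \<Rightarrow> nat \<Rightarrow> 'a" where
  "Ssh C D 0 = 0"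
| "Ssh C D (Suc 0) = 1"
| "Ssh C D (Suc (Suc n)) = C ^ (2 ^ n) * Ssh C D (Suc n) + D ^ (2 ^ n) * Ssh C D n"

end

theory Submission
  imports Defs "HOL-Number_Theory.Residues" "HOL-Computational_Algebra.Polynomial"
begin


lemma fin_field_char2:
  fixes m :: nat
  assumes "card (UNIV :: 'a::{field,finite} set) = 2 ^ m" "m \<ge> 1"
  shows "(2::'a) = 0"
proof -
  have pos: "CHAR('a) > 0" by (rule finite_imp_CHAR_pos) simp
  have pr: "prime CHAR('a)" using prime_CHAR_semidom[OF pos] .
  have "CHAR('a) dvd 2 ^ m" using CHAR_dvd_CARD[where 'a='a] assms(1) by simp
  then have "CHAR('a) dvd 2" using pr prime_dvd_power by blast
  then have "CHAR('a) = 2" using pr by (metis prime_nat_iff two_is_prime_nat prime_gt_1_nat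
        dvd_antisym nat_dvd_not_less less_2_cases_iff not_prime_0 not_prime_1)
  then show ?thesis using of_nat_CHAR[where 'a='a] by simp
qed

lemma fin_field_pow_card:
  fixes x :: "'a :: {field,finite}"
  shows   "x ^ card (UNIV :: 'a set) = x"
proof (cases "x = 0")
  case False
  have "x * (\<Prod>y\<in>UNIV-{0}. x * y) = x * x ^ (card (UNIV :: 'a set) - 1) * \<Prod>(UNIV-{0})"
    by (simp add: prod.distrib mult_ac)
  also have "x * x ^ (card (UNIV :: 'a set) - 1) = x ^ Suc (card (UNIV :: 'a set) - 1)"
    by (subst power_Suc) auto
  also have "Suc (card (UNIV :: 'a set) - 1) = card (UNIV :: 'a set)"
    using finite_UNIV_card_ge_0[where ?'a = 'a] by simp
  also have "(\<Prod>y\<in>UNIV-{0}. x * y) = (\<Prod>y\<in>UNIV-{0}. y)"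
    by (rule prod.reindex_bij_witness[of _ "\<lambda>y. y / x" "\<lambda>y. x * y"]) (use False in auto)
  finally show ?thesis
    by simp
qed (use finite_UNIV_card_ge_0[where ?'a = 'a] in auto)

context
  assumes two: "(2::'a::field) = 0"
begin

lemma c2_add_self[simp]: "(x::'a) + x = 0"
  using two by (metis mult_2 mult_zero_left)

lemma c2_neg[simp]: "- (x::'a) = x"
  by (metis add_eq_0_iff2 c2_add_self)

lemma c2_diff: "(x::'a) - y = x + y"
  by (metis c2_neg diff_minus_eq_add)

lemma c2_sq: "((x::'a) + y) ^ 2 = x ^ 2 + y ^ 2"
  by (simp add: power2_sum two)

lemma c2_pow2k: "((x::'a) + y) ^ (2 ^ k) = x ^ (2 ^ k) + y ^ (2 ^ k)"
proof (induction k)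
  case 0 then show ?case by simp
next
  case (Suc k)
  have "((x::'a) + y) ^ (2 ^ Suc k) = (((x::'a) + y) ^ (2 ^ k))^2"
    by (simp add: power_mult[symmetric] mult.commute)
  also have "\<dots> = (x ^ (2 ^ k))^2 + (y ^ (2 ^ k))^2" using Suc c2_sq by simp
  also have "\<dots> = x ^ (2 ^ Suc k) + y ^ (2 ^ Suc k)"
    by (simp add: power_mult[symmetric] mult.commute)
  finally show ?case .
qed

lemma c2_pow2k_sum: "(\<Sum>i\<in>A. (f i::'a)) ^ (2 ^ k) = (\<Sum>i\<in>A. f i ^ (2 ^ k))"
proof (induction A rule: infinite_finite_induct)
  case (infinite A) then show ?case by simp
next
  case empty then show ?case by simp
next
  case (insert x F) then show ?case by (simp add: c2_pow2k)
qed

lemma c2_pow2k_inj: "(x::'a) ^ (2 ^ k) = y ^ (2 ^ k) \<Longrightarrow> x = y"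
proof -
  assume "(x::'a) ^ (2 ^ k) = y ^ (2 ^ k)"
  then have "(x + y) ^ (2 ^ k) = 0" by (simp add: c2_pow2k)
  then have "x + y = 0" by simp
  then show "x = y" by (metis add_eq_0_iff2 c2_neg)
qed

end



context
  assumes two: "(2::'a::field) = 0"
begin

lemma Ssh_S1_both:
  "Ssh C D (n+2) = C * Ssh C D (n+1) ^ 2 + D^2 * Ssh C D n ^ 4 \<and>
   Ssh C D (n+3) = C * Ssh C D (n+2) ^ 2 + D^2 * Ssh C D (n+1) ^ 4" for C D :: 'a
proof (induction n)
  case 0
  show ?case by (simp add: numeral_eq_Suc algebra_simps power2_eq_square power4_eq_xxxx)
next
  case (Suc n)
  let ?s = "Ssh C D"
  have r1: "?s (n+3) = C^(2^(n+1)) * ?s (n+2) + D^(2^(n+1)) * ?s (n+1)"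
    by (simp add: numeral_eq_Suc)
  have r2: "?s (n+4) = C^(2^(n+2)) * ?s (n+3) + D^(2^(n+2)) * ?s (n+2)"
    by (simp add: numeral_eq_Suc)
  have r0: "?s (n+2) = C^(2^n) * ?s (n+1) + D^(2^n) * ?s n"
    by (simp add: numeral_eq_Suc)
  have p1: "(C^(2^(n+1)))^2 = C^(2^(n+2))" "(D^(2^(n+1)))^2 = D^(2^(n+2))"
    "(C^(2^n))^4 = C^(2^(n+2))" "(D^(2^n))^4 = D^(2^(n+2))"
    by (simp_all add: power_mult[symmetric] power_add mult.commute)
  have sq3: "?s (n+3) ^ 2 = C^(2^(n+2)) * ?s (n+2)^2 + D^(2^(n+2)) * ?s (n+1)^2"
    unfolding r1 using p1 by (simp add: c2_sq[OF two] power_mult_distrib)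
  have sq2: "?s (n+2) ^ 4 = C^(2^(n+2)) * ?s (n+1)^4 + D^(2^(n+2)) * ?s n^4"
  proof -
    have "?s (n+2) ^ 4 = ?s (n+2) ^ (2^2)" by simp
    also have "\<dots> = (C^(2^n) * ?s (n+1))^(2^2) + (D^(2^n) * ?s n)^(2^2)"
      unfolding r0 by (rule c2_pow2k[OF two])
    finally show ?thesis using p1 by (simp add: power_mult_distrib)
  qed
  have h2: "?s (n+2) = C * ?s (n+1) ^ 2 + D^2 * ?s n ^ 4" and
       h3: "?s (n+3) = C * ?s (n+2) ^ 2 + D^2 * ?s (n+1) ^ 4" using Suc.IH by auto
  have e1: "C^(2^(n+2)) * ?s (n+3) + D^(2^(n+2)) * ?s (n+2) =
    C^(2^(n+2)) * (C * ?s (n+2) ^ 2 + D^2 * ?s (n+1) ^ 4) + D^(2^(n+2)) * (C * ?s (n+1) ^ 2 + D^2 * ?s n ^ 4)"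
    by (simp only: h2[symmetric] h3[symmetric])
  have "?s (n+4) = C * ?s (n+3) ^ 2 + D^2 * ?s (n+2) ^ 4"
    unfolding r2 sq3 sq2 e1 by (simp add: algebra_simps)
  then show ?case using h3 by (simp add: numeral_eq_Suc)
qed

lemma Ssh_S1: "Ssh C D (n+2) = C * Ssh C D (n+1) ^ 2 + D^2 * Ssh C D n ^ 4" for C D :: 'a
  using Ssh_S1_both by blast

end

lemma Ssh_nz: "D \<noteq> 0 \<Longrightarrow> \<not> (Ssh C D k = 0 \<and> Ssh C D (Suc k) = (0::'a::field))"
proof (induction k)
  case 0 then show ?case by simp
next
  case (Suc k)
  then show ?case by auto
qed



lemma pow_pow2: "((x::'a::monoid_mult) ^ (2^a)) ^ (2^b) = x ^ (2^(a+b))"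
  by (simp add: power_mult[symmetric] power_add)

lemma powi_conv: "(D::'a::field) powi (1 - 2^(i+1)) = inverse (D ^ (2^(i+1) - 1))"
proof -
  have "(1::int) \<le> 2^i" by simp
  then have "(1::int) < 2 * 2^i" by linarith
  then have neg: "(1::int) - 2^(i+1) < 0" by (simp add: power_Suc)
  have "(1::nat) \<le> 2^(i+1)" by simp
  then have "int (2^(i+1) - 1) = 2^(i+1) - 1" by (simp add: of_nat_diff)
  then have "nat (- (1 - 2^(i+1) :: int)) = 2^(i+1) - 1"
    by (metis minus_diff_eq nat_int)
  then show ?thesis using neg by (simp add: power_int_def power_inverse)
qed



lemma pow4_pow2: "((x::'a::monoid_mult) ^ 4) ^ (2^b) = x ^ (2^(b+2))"
proof -
  have "(x ^ 4) ^ (2^b) = x ^ (4 * 2^b)" by (rule power_mult[symmetric])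
  also have "(4::nat) * 2^b = 2^(b+2)" by (simp add: power_add)
  finally show ?thesis .
qed
lemma pow2_pow2: "((x::'a::monoid_mult) ^ 2) ^ (2^b) = x ^ (2^(b+1))"
proof -
  have "(x ^ 2) ^ (2^b) = x ^ (2 * 2^b)" by (rule power_mult[symmetric])
  also have "(2::nat) * 2^b = 2^(b+1)" by (simp add: power_add)
  finally show ?thesis .
qed

context
  assumes two: "(2::'a::field) = 0"
begin

lemma T1:
  fixes C D u :: 'a and n m :: nat
  assumes m: "m = Suc (Suc n)" and hC: "C^(2^m) = C" and hD: "D^(2^m) = D" and D0: "D \<noteq> 0"
    and hu: "u^(2^m) = u"
  shows "(\<Sum>i<m. (Ssh C D (m - 1 - i) ^ (2 ^ (i + 1)) + D powi (1 - 2 ^ (i + 1)) * Ssh C D (i + 1))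
          * (u^4 + C*u^2 + D*u)^(2^i)) = (Ssh C D (m+1) + D * Ssh C D (m-1)^2) * u"
proof -
  define s where "s = Ssh C D"
  define pi where "pi i = D^(2^(i+1) - 1)" for i
  define c where "c i = s (m - 1 - i) ^ (2 ^ (i + 1)) + inverse (pi i) * s (i + 1)" for i
  define U where "U k = u^(2^k)" for k
  have cdef: "\<And>i. (Ssh C D (m - 1 - i) ^ (2 ^ (i + 1)) + D powi (1 - 2 ^ (i + 1)) * Ssh C D (i + 1)) = c i"
    unfolding c_def s_def pi_def powi_conv by simp
  have a_pow: "\<And>i. (u^4 + C*u^2 + D*u)^(2^i) = U(i+2) + C^(2^i) * U(i+1) + D^(2^i) * U i"
    unfolding U_def by (simp add: c2_pow2k[OF two] power_mult_distrib pow4_pow2 pow2_pow2)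
  have pi0: "pi 0 = D" by (simp add: pi_def)
  have piS: "\<And>i. pi (Suc i) = pi i * D^(2^(i+1))"
  proof -
    fix i
    have "(2::nat)^(Suc i + 1) - 1 = (2^(i+1) - 1) + 2^(i+1)" by simp
    then show "pi (Suc i) = pi i * D^(2^(i+1))" by (simp only: pi_def power_add)
  qed
  have pi_nz: "\<And>i. pi i \<noteq> 0" using D0 by (simp add: pi_def)
  have pi_last: "pi (n+1) = 1"
  proof -
    have "D * pi (n+1) = D^(2^m)" unfolding pi_def m
      by (simp add: power_Suc[symmetric] del: power_Suc)
    then have "D * pi (n+1) = D * 1" using hD by simp
    then show ?thesis using D0 by simp
  qed
  have rec: "\<And>k. s (Suc (Suc k)) = C^(2^k) * s (Suc k) + D^(2^k) * s k" by (simp add: s_def)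
  have S1: "\<And>k. s (k+2) = C * s (k+1) ^ 2 + D^2 * s k ^ 4" unfolding s_def by (rule Ssh_S1[OF two])
  have interior: "c i + C^(2^(i+1)) * c (i+1) + D^(2^(i+2)) * c (i+2) = 0" if "i < n" for i
  proof -
    obtain k where nk: "n = i + 1 + k" using \<open>i < n\<close> by (metis add_Suc less_imp_Suc_add add.commute plus_1_eq_Suc add.assoc)
    have i1: "m - 1 - i = k + 2" "m - 1 - (i+1) = k + 1" "m - 1 - (i+2) = k" using nk m by auto
    have p: "s (k+2) ^ (2^(i+1)) = C^(2^(i+1)) * s (k+1) ^ (2^(i+2)) + D^(2^(i+2)) * s k ^ (2^(i+3))"
    proof -
      have "s (k+2) ^ (2^(i+1)) = (C * s (k+1) ^ 2) ^ (2^(i+1)) + (D^2 * s k ^ 4) ^ (2^(i+1))"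
        unfolding S1 by (rule c2_pow2k[OF two])
      also have "\<dots> = C^(2^(i+1)) * s (k+1) ^ (2^(i+1+1)) + D^(2^(i+1+1)) * s k ^ (2^(i+1+2))"
        by (simp only: power_mult_distrib pow2_pow2 pow4_pow2)
      finally show ?thesis by (simp add: numeral_eq_Suc)
    qed
    have e: "inverse (pi i) * s (i+1) + C^(2^(i+1)) * (inverse (pi (i+1)) * s (i+2))
             + D^(2^(i+2)) * (inverse (pi (i+2)) * s (i+3)) = 0"
    proof -
      have r: "s (i+3) = C^(2^(i+1)) * s (i+2) + D^(2^(i+1)) * s (i+1)"
        using rec[of "i+1"] by (simp add: numeral_eq_Suc)
      have pp: "pi (i+1) = pi i * D^(2^(i+1))" "pi (i+2) = pi i * D^(2^(i+1)) * D^(2^(i+2))"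
        using piS[of i] piS[of "i+1"] by (simp_all add: numeral_eq_Suc)
      have nz: "D^(2^(i+1)) \<noteq> 0" "D^(2^(i+2)) \<noteq> 0" using D0 by simp_all
      have "inverse (pi i) * s (i+1) + C^(2^(i+1)) * (inverse (pi (i+1)) * s (i+2))
             + D^(2^(i+2)) * (inverse (pi (i+2)) * s (i+3))
           = inverse (pi i * D^(2^(i+1))) * (2 * (D^(2^(i+1)) * s (i+1) + C^(2^(i+1)) * s (i+2)))"
        unfolding pp r using nz pi_nz[of i] by (simp add: field_simps)
      then show ?thesis using two by simp
    qed
    have "c i + C^(2^(i+1)) * c (i+1) + D^(2^(i+2)) * c (i+2)
      = (s (k+2) ^ (2^(i+1)) + C^(2^(i+1)) * s (k+1) ^ (2^(i+2)) + D^(2^(i+2)) * s k ^ (2^(i+3)))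
        + (inverse (pi i) * s (i+1) + C^(2^(i+1)) * (inverse (pi (i+1)) * s (i+2))
             + D^(2^(i+2)) * (inverse (pi (i+2)) * s (i+3)))"
      unfolding c_def i1 by (simp add: algebra_simps numeral_eq_Suc)
    also have "\<dots> = 0" unfolding e p using two by (simp add: algebra_simps)
    finally show ?thesis .
  qed
  have U0: "U 0 = u" "U 1 = u^2" "U (Suc (Suc n)) = u" "U (Suc (Suc (Suc n))) = u^2"
  proof -
    show "U 0 = u" "U 1 = u^2" by (simp_all add: U_def)
    show "U (Suc (Suc n)) = u" unfolding U_def m[symmetric] using hu .
    have "U (Suc (Suc (Suc n))) = u ^ (2^m * 2)" unfolding U_def m by (simp add: mult.commute)
    also have "\<dots> = u^2" by (simp only: power_mult hu)
    finally show "U (Suc (Suc (Suc n))) = u^2" .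
  qed
  have "(\<Sum>i<m. c i * (U(i+2) + C^(2^i) * U(i+1) + D^(2^i) * U i))
      = (\<Sum>i<m. c i * U(i+2)) + (\<Sum>i<m. c i * C^(2^i) * U(i+1)) + (\<Sum>i<m. c i * D^(2^i) * U i)"
    by (simp add: sum.distrib algebra_simps)
  also have "(\<Sum>i<m. c i * U(i+2)) = (\<Sum>i<n. c i * U(i+2)) + c n * U(n+2) + c (n+1) * U (n+3)"
    unfolding m by (simp add: numeral_eq_Suc)
  also have "(\<Sum>i<m. c i * C^(2^i) * U(i+1)) = c 0 * C * U 1 + (\<Sum>i<n. c (i+1) * C^(2^(i+1)) * U(i+2))
       + c (n+1) * C^(2^(n+1)) * U (n+2)"
    unfolding m by (subst sum.lessThan_Suc_shift) (simp add: numeral_eq_Suc)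
  also have "(\<Sum>i<m. c i * D^(2^i) * U i) = c 0 * D * U 0 + c 1 * D^2 * U 1
       + (\<Sum>i<n. c (i+2) * D^(2^(i+2)) * U(i+2))"
    unfolding m by (subst sum.lessThan_Suc_shift, subst sum.lessThan_Suc_shift) (simp add: numeral_eq_Suc)
  finally have split: "(\<Sum>i<m. c i * (U(i+2) + C^(2^i) * U(i+1) + D^(2^i) * U i))
     = (\<Sum>i<n. (c i + C^(2^(i+1)) * c (i+1) + D^(2^(i+2)) * c (i+2)) * U(i+2))
       + (c n + c (n+1) * C^(2^(n+1)) + c 0 * D) * u + (c (n+1) + c 0 * C + c 1 * D^2) * u^2"
    using U0 by (simp add: sum.distrib algebra_simps numeral_eq_Suc)
  have int0: "(\<Sum>i<n. (c i + C^(2^(i+1)) * c (i+1) + D^(2^(i+2)) * c (i+2)) * U(i+2)) = 0"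
    using interior by simp
  have cn: "c n = 1 + inverse (pi n) * s (n+1)" unfolding c_def m by (simp add: s_def)
  have cn1: "c (n+1) = s (n+2)" unfolding c_def m using pi_last by (simp add: s_def)
  have c0: "c 0 = s (n+1)^2 + inverse D" unfolding c_def m using pi0 by (simp add: s_def)
  have c1: "c 1 = s n ^ 4 + inverse (D^3) * C" unfolding c_def m
    using piS[of 0] pi0 by (simp add: s_def numeral_eq_Suc)
  have invpn: "inverse (pi n) = D^(2^(n+1))"
    using piS[of n] pi_last pi_nz[of n] by (simp add: field_simps)
  have coef1: "c n + c (n+1) * C^(2^(n+1)) + c 0 * D = s (n+3) + D * s (n+1)^2"
  proof -
    have r: "s (n+3) = C^(2^(n+1)) * s (n+2) + D^(2^(n+1)) * s (n+1)"
      using rec[of "n+1"] by (simp add: numeral_eq_Suc)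
    have "c n + c (n+1) * C^(2^(n+1)) + c 0 * D = s (n+3) + D * s (n+1)^2 + 2"
      unfolding cn cn1 c0 invpn r using D0 by (simp add: field_simps)
    then show ?thesis using two by simp
  qed
  have coef2: "c (n+1) + c 0 * C + c 1 * D^2 = 0"
  proof -
    have "c (n+1) + c 0 * C + c 1 * D^2 = 2 * (C * inverse D + C * s (n+1)^2 + D^2 * s n ^ 4)"
      unfolding cn1 c0 c1 S1 using D0 by (simp add: field_simps power2_eq_square power3_eq_cube)
    then show ?thesis using two by simp
  qed
  have "(\<Sum>i<m. (Ssh C D (m - 1 - i) ^ (2 ^ (i + 1)) + D powi (1 - 2 ^ (i + 1)) * Ssh C D (i + 1))
          * (u^4 + C*u^2 + D*u)^(2^i)) = (\<Sum>i<m. c i * (U(i+2) + C^(2^i) * U(i+1) + D^(2^i) * U i))"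
    by (simp only: cdef a_pow)
  also have "\<dots> = (s (n+3) + D * s (n+1)^2) * u" unfolding split int0 coef1 coef2 by simp
  finally show ?thesis unfolding m s_def by (simp add: numeral_eq_Suc)
qed
end


lemma linpoly_root_bound:
  fixes c :: "nat \<Rightarrow> 'a::field"
  assumes A: "finite A" "2^m \<le> card A" and z: "\<forall>x\<in>A. (\<Sum>i<m. c i * x^(2^i)) = 0" and j: "j < m"
  shows "c j = 0"
proof -
  define p where "p = (\<Sum>i<m. monom (c i) (2^i))"
  have ev: "poly p x = (\<Sum>i<m. c i * x^(2^i))" for x
    by (simp add: p_def poly_sum poly_monom)
  have cf: "coeff p k = (\<Sum>i<m. if 2^i = k then c i else 0)" for k
    by (simp add: p_def coeff_sum)
  have p0: "p = 0"
  proof (rule ccontr)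
    assume np: "p \<noteq> 0"
    have "degree p \<le> 2^(m-1)"
    proof (rule degree_le, intro allI impI)
      fix k :: nat assume k: "2^(m-1) < k"
      have "\<And>i. i < m \<Longrightarrow> (2::nat)^i \<noteq> k"
      proof -
        fix i assume "i < m"
        then have "(2::nat)^i \<le> 2^(m-1)" by (intro power_increasing) auto
        then show "(2::nat)^i \<noteq> k" using k by linarith
      qed
      then show "coeff p k = 0" unfolding cf by simp
    qed
    moreover have "card A \<le> card {x. poly p x = 0}"
      using z ev by (intro card_mono poly_roots_finite[OF np]) auto
    moreover have "card {x. poly p x = 0} \<le> degree p" by (rule card_poly_roots_bound[OF np])
    moreover have "(2::nat)^(m-1) < 2^m" using j by (intro power_strict_increasing) auto
    ultimately show False using A by linarith
  qed
  have "coeff p (2^j) = c j"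
  proof -
    have "coeff p (2^j) = (\<Sum>i<m. if i = j then c i else 0)"
      unfolding cf by (intro sum.cong) auto
    also have "\<dots> = c j" using j by simp
    finally show ?thesis .
  qed
  then show ?thesis using p0 by simp
qed

lemma card_additive:
  fixes f :: "'a::ab_group_add \<Rightarrow> 'b::ab_group_add"
  assumes fin: "finite (UNIV :: 'a set)" and add: "\<And>x y. f (x + y) = f x + f y"
  shows "card (UNIV :: 'a set) \<le> card (range f) * card {x. f x = 0}"
proof -
  have UN: "(UNIV :: 'a set) = (\<Union>c\<in>range f. {x. f x = c})" by auto
  have fib: "card {x. f x = c} \<le> card {x. f x = 0}" if "c \<in> range f" for c
  proof -
    obtain x0 where c: "c = f x0" using \<open>c \<in> range f\<close> by auto
    have f0: "f (x - x0) = f x - f x0" for x using add[of "x - x0" x0] by (simp add: algebra_simps)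
    have "{x. f x = c} \<subseteq> (\<lambda>k. x0 + k) ` {x. f x = 0}"
    proof
      fix x assume "x \<in> {x. f x = c}"
      then have "x - x0 \<in> {x. f x = 0}" using f0 c by simp
      then show "x \<in> (\<lambda>k. x0 + k) ` {x. f x = 0}" by (intro image_eqI[of _ _ "x - x0"]) auto
    qed
    then have "card {x. f x = c} \<le> card ((\<lambda>k. x0 + k) ` {x. f x = 0})"
      using fin by (intro card_mono) (auto intro: finite_subset)
    also have "\<dots> \<le> card {x. f x = 0}" by (rule card_image_le) (use fin in \<open>auto intro: finite_subset\<close>)
    finally show ?thesis .
  qed
  have "card (UNIV :: 'a set) \<le> (\<Sum>c\<in>range f. card {x. f x = c})"
    by (subst UN, rule card_UN_le) (use fin in auto)
  also have "\<dots> \<le> card (range f) * card {x. f x = 0}"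
    using sum_bounded_above[of "range f" "\<lambda>c. card {x. f x = c}" "card {x. f x = 0}"] fib by simp
  finally show ?thesis .
qed

lemma Ssh_fix:
  fixes C D :: "'a::field"
  assumes hC: "C^(2^m) = C" and hD: "D^(2^m) = D" and two: "(2::'a::field) = 0"
  shows "Ssh C D k ^ (2^m) = Ssh C D k"
proof -
  have "Ssh C D k ^ (2^m) = Ssh C D k \<and> Ssh C D (Suc k) ^ (2^m) = Ssh C D (Suc k)"
  proof (induction k)
    case 0 then show ?case by simp
  next
    case (Suc k)
    have fx: "(C^(2^k))^(2^m) = C^(2^k)" "(D^(2^k))^(2^m) = D^(2^k)"
      by (metis hC hD power_mult mult.commute)+
    have "Ssh C D (Suc (Suc k)) ^ (2^m) = (C^(2^k))^(2^m) * Ssh C D (Suc k) ^ (2^m) + (D^(2^k))^(2^m) * Ssh C D k ^ (2^m)"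
      by (simp only: Ssh.simps c2_pow2k[OF two] power_mult_distrib)
    also have "\<dots> = Ssh C D (Suc (Suc k))" using Suc.IH fx by simp
    finally show ?case using Suc.IH by simp
  qed
  then show ?thesis by blast
qed

context
  assumes two: "(2::'a::field) = 0"
begin

lemma tau_idem:
  fixes C D :: 'a
  assumes m: "m = Suc n" and hC: "C^(2^m) = C" and hD: "D^(2^m) = D"
  shows "(Ssh C D (m+1) + D * Ssh C D (m-1)^2)^2 = Ssh C D (m+1) + D * Ssh C D (m-1)^2"
proof -
  let ?s = "Ssh C D"
  have e2: "?s (m+1) = C * ?s m ^ 2 + D^2 * ?s (m-1) ^ 4"
    using Ssh_S1[OF two, of C D n] m by (simp add: numeral_eq_Suc)
  have r: "?s (m+1) = C^(2^n) * ?s m + D^(2^n) * ?s (m-1)" using m by simp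
  have pC: "(C^(2^n))^2 = C" "(D^(2^n))^2 = D" using hC hD m
    by (simp_all add: power_mult[symmetric] mult.commute)
  have e3: "?s (m+1)^2 = C * ?s m ^ 2 + D * ?s (m-1)^2"
    unfolding r c2_sq[OF two] power_mult_distrib pC ..
  have "(?s (m+1) + D * ?s (m-1)^2)^2 = ?s (m+1)^2 + D^2 * ?s (m-1)^4"
    by (simp add: c2_sq[OF two] power_mult_distrib power_mult[symmetric])
  also have "\<dots> = ?s (m+1) + D * ?s (m-1)^2" unfolding e3 by (subst e2) (simp add: algebra_simps)
  finally show ?thesis .
qed

lemma root_constr:
  fixes C D \<beta> :: 'a
  assumes m1: "m \<ge> 1" and hC: "C^(2^m) = C" and hD: "D^(2^m) = D" and hb: "\<beta>^(2^m) = \<beta>"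
    and sm: "Ssh C D m = 0" and sm1: "Ssh C D (m+1) = 1"
  defines "u \<equiv> (\<Sum>j<m. (\<beta> * Ssh C D (m-j))^(2^j))"
  shows "u^4 + C * u^2 + D * u = 0" and "u^2 = (\<Sum>j<m. (\<beta> * Ssh C D (m+1-j))^(2^j))"
proof -
  let ?s = "Ssh C D"
  define g where "g j = (\<beta> * ?s (m+1-j))^(2^j)" for j
  define h where "h j = (\<beta> * ?s (m+2-j))^(2^j)" for j
  have sq: "(x^(2^j))^2 = x^(2^(Suc j))" for x :: 'a and j
    by (simp add: power_mult[symmetric] mult.commute)
  have u2: "u^2 = (\<Sum>j<m. g j)"
  proof -
    have "u^2 = (\<Sum>j<m. g (Suc j))"
      unfolding u_def c2_pow2k_sum[OF two, of _ _ 1, simplified] g_def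
      by (intro sum.cong) (auto simp: sq)
    also have "\<dots> = (\<Sum>j<Suc m. g j) - g 0" unfolding sum.lessThan_Suc_shift by simp
    also have "\<dots> = (\<Sum>j<m. g j) + g m - g 0" by simp
    also have "g m = g 0" using hb sm1 by (simp add: g_def)
    finally show ?thesis by simp
  qed
  have u4: "u^4 = (\<Sum>j<m. h j)"
  proof -
    have "u^4 = (u^2)^2" by simp
    also have "\<dots> = (\<Sum>j<m. h (Suc j))"
      unfolding u2 c2_pow2k_sum[OF two, of _ _ 1, simplified] g_def h_def
      by (intro sum.cong) (auto simp: sq Suc_diff_le)
    also have "\<dots> = (\<Sum>j<Suc m. h j) - h 0" unfolding sum.lessThan_Suc_shift by simp
    also have "\<dots> = (\<Sum>j<m. h j) + h m - h 0" by simp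
    also have "h m = h 0"
    proof -
      have "?s (m+2) = C" using sm sm1 hC by (simp add: numeral_eq_Suc)
      then show ?thesis using hb hC by (simp add: h_def power_mult_distrib numeral_eq_Suc)
    qed
    finally show ?thesis by simp
  qed
  have term0: "h j + C * g j + D * (\<beta> * ?s (m-j))^(2^j) = 0" if "j < m" for j
  proof -
    define k where "k = m - j"
    have k: "m = j + k" "k \<ge> 1" using \<open>j < m\<close> by (auto simp: k_def)
    have i: "m+2-j = k+2" "m+1-j = k+1" "m-j = k" using k by auto
    have e: "(2::nat)^k * 2^j = 2^m" using k by (simp add: power_add mult.commute)
    have pC: "(C^(2^k))^(2^j) = C" "(D^(2^k))^(2^j) = D"
      by (simp_all only: power_mult[symmetric] e hC hD)
    have r: "?s (k+2) ^ (2^j) = C * ?s (k+1)^(2^j) + D * ?s k ^(2^j)"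
    proof -
      have "?s (k+2) = C^(2^k) * ?s (k+1) + D^(2^k) * ?s k" by (simp add: numeral_eq_Suc)
      then have "?s (k+2) ^ (2^j) = (C^(2^k))^(2^j) * ?s (k+1)^(2^j) + (D^(2^k))^(2^j) * ?s k ^(2^j)"
        by (simp add: c2_pow2k[OF two] power_mult_distrib)
      then show ?thesis unfolding pC .
    qed
    have "h j + C * g j + D * (\<beta> * ?s (m-j))^(2^j) = \<beta>^(2^j) * (2 * (C * ?s (k+1)^(2^j) + D * ?s k ^(2^j)))"
      unfolding h_def g_def i power_mult_distrib r by (simp add: algebra_simps)
    then show ?thesis using two by simp
  qed
  have "u^4 + C * u^2 + D * u = (\<Sum>j<m. h j + C * g j + D * (\<beta> * ?s (m-j))^(2^j))"
    unfolding u4 u2 by (simp add: u_def sum.distrib sum_distrib_left)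
  also have "\<dots> = 0" using term0 by simp
  finally show "u^4 + C * u^2 + D * u = 0" .
  show "u^2 = (\<Sum>j<m. (\<beta> * Ssh C D (m+1-j))^(2^j))" using u2 by (simp add: g_def)
qed

end


lemma G_ident:
  fixes b4 dq d w :: "'a::comm_ring_1"
  shows "b4 * ((dq + w)^2 * (d + w)) + b4 * ((d+w)^2 * (dq + w)) =
    b4 * (d + dq) * w^2 + b4 * (d+dq)^2 * w + b4 * (dq * d) * (d + dq) + 2 * (b4 * w * (d+w) * (dq+w))"
  by (simp add: algebra_simps power2_eq_square mult_2)

theorem theorem3p11:
  fixes b \<delta> :: "'a::{field,finite}" and m q :: nat
    and B C D :: 'a and P Pinv :: "'a \<Rightarrow> 'a"
  assumes hq: "q = 2 ^ m" and hq4: "q \<ge> 4" and hcard: "card (UNIV :: 'a set) = q ^ 2"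
    and hb: "b ^ q = b" "b \<noteq> 0"
    and h\<delta>: "\<delta> ^ q \<noteq> \<delta>"
  defines "B \<equiv> b ^ 4 * \<delta> ^ (q + 1) * Tr q \<delta>"
    and "C \<equiv> b ^ 4 * Tr q \<delta>"
    and "D \<equiv> b ^ 4 * (Tr q \<delta>) ^ 2"
    and "P \<equiv> (\<lambda>x. b * (x ^ q + x + \<delta>) ^ (q * (2 * q + 1) div 4) + x)"
    and "Pinv \<equiv> (\<lambda>x. x + b * (\<delta> + (\<Sum>i<m.
            ((Ssh C D (m - 1 - i)) ^ (2 ^ (i + 1)) + D powi (1 - 2 ^ (i + 1)) * Ssh C D (i + 1))
            * (x ^ (4 * q) + x ^ 4 + B) ^ (2 ^ i))) ^ (q * (2 * q + 1) div 4))"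
  assumes hperm: "bij P"
  shows "\<forall>c. P (Pinv c) = c \<and> Pinv (P c) = c"
proof -
  have m2: "m \<ge> 2"
  proof (rule ccontr)
    assume "\<not> m \<ge> 2"
    then have "m \<le> 1" by simp
    then have "(2::nat)^m \<le> 2^1" by (intro power_increasing) auto
    then show False using hq hq4 by simp
  qed
  obtain n where mn: "m = Suc (Suc n)" using m2 by (metis add_2_eq_Suc le_Suc_ex)
  have two: "(2::'a) = 0"
    using fin_field_char2[of "2*m"] hcard hq m2 by (simp add: power_mult[symmetric] mult.commute)
  have q0: "q > 0" using hq by simp
  have fq: "\<And>x y::'a. (x + y)^q = x^q + y^q" unfolding hq by (rule c2_pow2k[OF two])
  have fqq: "\<And>x::'a. x^(q*q) = x" using fin_field_pow_card[where 'a='a] hcard by (simp add: power2_eq_square)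
  have pq: "\<And>(x::'a) k. (x^k)^q = (x^q)^k" by (simp add: power_mult[symmetric] mult.commute)
  define t where "t = \<delta> + \<delta>^q"
  have Tr_t: "Tr q \<delta> = t" by (simp add: Tr_def t_def)
  have tq: "t^q = t" unfolding t_def fq power_mult[symmetric] fqq by (rule add.commute)
  have t0: "t \<noteq> 0"
  proof
    assume "t = 0"
    then have "\<delta>^q = - \<delta>" unfolding t_def using add_eq_0_iff[of \<delta> "\<delta>^q"] by simp
    then show False using h\<delta> c2_neg[OF two] by simp
  qed
  have Cq: "C^q = C" unfolding C_def Tr_t power_mult_distrib pq hb tq ..
  have Dq: "D^q = D" unfolding D_def Tr_t power_mult_distrib pq hb tq ..
  have D0: "D \<noteq> 0" unfolding D_def Tr_t using t0 hb by simp
  have Bq: "B^q = B"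
  proof -
    have "(\<delta>^(q+1))^q = \<delta>^(q+1)"
      by (simp add: power_add power_mult_distrib pq power_mult[symmetric] fqq mult.commute)
    then show ?thesis unfolding B_def Tr_t power_mult_distrib pq hb tq by simp
  qed

  define e where "e = q * (2 * q + 1) div 4"
  have he: "4 * e = 2 * q * q + q"
  proof -
    have "4 dvd q" using hq mn by simp
    then obtain k where qk: "q = 4 * k" by blast
    have "q * (2 * q + 1) = 4 * (k * (2 * q + 1))" using qk by simp
    then have "e = k * (2 * q + 1)" unfolding e_def by simp
    then show ?thesis using qk by (simp add: algebra_simps)
  qed
  have z4e: "(z^e)^4 = z^2 * z^q" for z :: 'a
  proof -
    have "(z^e)^4 = z^(4*e)" by (simp add: power_mult[symmetric] mult.commute)
    also have "\<dots> = (z^(q*q))^2 * z^q"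
    proof -
      have "2 * q * q = (q * q) * 2" by simp
      then show ?thesis unfolding he by (simp only: power_add power_mult)
    qed
    finally show ?thesis by (simp add: fqq)
  qed
  have f4: "(x + y)^4 = x^4 + y^4" for x y :: 'a
    using c2_pow2k[OF two, of x y 2] by simp
  define L where "L w = w^4 + C * w^2 + D * w" for w :: 'a
  define g where "g w = b * ((\<delta> + w)^e)^q + b * (\<delta> + w)^e" for w :: 'a
  have G: "(g w)^4 = C * w^2 + D * w + B" if wq: "w^q = w" for w
  proof -
    define z where "z = \<delta> + w"
    have zq: "z^q = \<delta>^q + w" unfolding z_def fq wq ..
    have A1: "((z^e)^q)^4 = (z^q)^2 * z"
    proof -
      have "((z^e)^q)^4 = ((z^e)^4)^q" using pq[of "z^e" 4] by simp
      also have "\<dots> = (z^q)^2 * z^(q*q)" unfolding z4e power_mult_distrib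
        by (simp add: power_mult[symmetric] mult.commute)
      finally show ?thesis by (simp add: fqq)
    qed
    have "(g w)^4 = b^4 * ((z^e)^q)^4 + b^4 * (z^e)^4"
      unfolding g_def f4 z_def[symmetric] power_mult_distrib ..
    also have "\<dots> = b^4 * ((z^q)^2 * z) + b^4 * (z^2 * z^q)" unfolding A1 z4e ..
    also have "\<dots> = C * w^2 + D * w + B + 2 * (b^4 * w * (\<delta>+w) * (\<delta>^q+w))"
      unfolding zq unfolding z_def C_def D_def B_def Tr_t t_def power_add power_one_right
      by (rule G_ident)
    finally show ?thesis using two by simp
  qed
  have star: "(P x)^(4*q) + (P x)^4 + B = L (x^q + x)" and uq: "(x^q + x)^q = x^q + x" for x
  proof -
    define u where "u = x^q + x"
    show uq': "(x^q + x)^q = x^q + x" unfolding fq power_mult[symmetric] fqq by (rule add.commute)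
    have Px: "P x = b * (\<delta> + u)^e + x" unfolding P_def e_def u_def by (simp add: add_ac)
    have "(P x)^q = b * ((\<delta> + u)^e)^q + x^q" unfolding Px fq power_mult_distrib hb ..
    then have "(P x)^q + P x = g u + u" unfolding g_def u_def Px by (simp add: add_ac)
    then have "(P x)^(4*q) + (P x)^4 = (g u)^4 + u^4"
      by (metis f4 power_mult mult.commute)
    also have "\<dots> = C * u^2 + D * u + B + u^4" using G uq' unfolding u_def by simp
    finally show "(P x)^(4*q) + (P x)^4 + B = L (x^q + x)"
      unfolding L_def u_def[symmetric] using two by (simp add: algebra_simps)
  qed

  have c2eq: "\<And>a b::'a. a + b = 0 \<longleftrightarrow> a = b"
    using c2_neg[OF two] by (metis add_eq_0_iff)
  define Fq where "Fq = {u::'a. u^q = u}"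
  have finFq: "finite Fq" by simp
  have cardFq: "2^m \<le> card Fq"
  proof -
    define f where "f x = x^q + x" for x :: 'a
    have fadd: "f (x + y) = f x + f y" for x y unfolding f_def fq by (simp add: add_ac)
    have ker: "{x. f x = 0} = Fq" unfolding f_def Fq_def using c2eq by auto
    have rng: "range f \<subseteq> Fq" unfolding f_def Fq_def using uq by auto
    have "card (UNIV::'a set) \<le> card (range f) * card {x. f x = 0}"
      by (rule card_additive) (auto simp: fadd)
    also have "\<dots> \<le> card Fq * card Fq" unfolding ker
      by (intro mult_right_mono card_mono[OF finFq rng]) auto
    finally have "q^2 \<le> (card Fq)^2" using hcard by (simp add: power2_eq_square)
    then have "q \<le> card Fq" by (rule power2_le_imp_le) simp
    then show ?thesis using hq by simp
  qed
  have Lq: "(L u)^q = L (u^q)" for u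
    unfolding L_def fq power_mult_distrib Cq Dq by (simp add: power_mult[symmetric] mult.commute)
  have Ladd: "L (u + v) = L u + L v" for u v
  proof -
    have "L (u + v) = L u + L v + 2 * (C * u * v)"
      unfolding L_def f4 by (simp add: algebra_simps power2_eq_square)
    then show ?thesis using two by simp
  qed
  have noroot: "w = 0" if wF: "w \<in> Fq" and Lw: "L w = 0" for w
  proof (rule ccontr)
    assume w0: "w \<noteq> 0"
    have wq: "w^q = w" using wF Fq_def by simp
    define y0 where "y0 = P 0"
    have z0q: "(0::'a)^q = 0" using q0 by simp
    have y0: "y0 = b * \<delta>^e" unfolding y0_def P_def e_def z0q by simp
    define x2 where "x2 = y0 + b * (\<delta> + w)^e"
    have x2q: "x2^q + x2 = g 0 + g w"
      unfolding x2_def y0 g_def fq power_mult_distrib hb by (simp add: add_ac)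
    have "(g 0 + g w)^4 = w^4 + 2 * B"
    proof -
      have g0: "(g 0)^4 = B" using G[of 0] q0 by simp
      have "w^4 + C * w^2 + D * w = 0" using Lw unfolding L_def .
      then have "C * w^2 + D * w = w^4" using c2eq by (simp add: add.assoc)
      then have gw: "(g w)^4 = w^4 + B" using G[OF wq] by simp
      show ?thesis unfolding f4 g0 gw by (simp add: algebra_simps)
    qed
    then have "(g 0 + g w)^(2^2) = w^(2^2)" using two by simp
    then have gw: "g 0 + g w = w" by (rule c2_pow2k_inj[OF two])
    have "P x2 = b * (w + \<delta>)^e + y0 + b * (\<delta> + w)^e"
      unfolding P_def e_def[symmetric] x2q gw by (simp add: x2_def add_ac)
    also have "\<dots> = y0 + 2 * (b * (\<delta> + w)^e)" by (simp add: algebra_simps)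
    finally have "P x2 = P 0" using two y0_def by simp
    then have "x2 = 0" using hperm by (metis bij_is_inj injD)
    then have "w = 0" using x2q gw z0q by simp
    then show False using w0 by simp
  qed
  have LFq: "L u \<in> Fq" if "u \<in> Fq" for u using that Lq unfolding Fq_def by simp
  have Linj: "inj_on L Fq"
  proof (rule inj_onI)
    fix u v assume uF: "u \<in> Fq" and vF: "v \<in> Fq" and e: "L u = L v"
    have "u + v \<in> Fq" using uF vF unfolding Fq_def by (simp add: fq)
    moreover have "L (u + v) = 0" unfolding Ladd e by (rule c2_add_self[OF two])
    ultimately have "u + v = 0" by (rule noroot)
    then show "u = v" using c2eq by simp
  qed
  have Lsurj: "L ` Fq = Fq" by (rule endo_inj_surj[OF finFq]) (use LFq Linj in auto)
  have hC2: "C^(2^m) = C" using Cq hq by simp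
  have hD2: "D^(2^m) = D" using Dq hq by simp
  define tau where "tau = Ssh C D (m+1) + D * Ssh C D (m-1)^2"
  define cc where "cc i = (Ssh C D (m - 1 - i)) ^ (2 ^ (i + 1)) + D powi (1 - 2 ^ (i + 1)) * Ssh C D (i + 1)" for i
  define M where "M a = (\<Sum>i<m. cc i * a ^ (2 ^ i))" for a
  have MLu: "M (L u) = tau * u" if "u \<in> Fq" for u
  proof -
    have "u^(2^m) = u" using that hq Fq_def by simp
    then show ?thesis unfolding M_def cc_def L_def tau_def by (rule T1[OF two mn hC2 hD2 D0])
  qed
  have tau2: "tau^2 = tau" unfolding tau_def by (rule tau_idem[OF two _ hC2 hD2]) (use mn in simp)
  have tau0: "tau \<noteq> 0"
  proof
    assume t0: "tau = 0"
    have Mz: "\<forall>a\<in>Fq. (\<Sum>i<m. cc i * a ^ (2 ^ i)) = 0"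
    proof
      fix a assume "a \<in> Fq"
      then obtain u where "u \<in> Fq" "a = L u" using Lsurj by auto
      then show "(\<Sum>i<m. cc i * a ^ (2 ^ i)) = 0" using MLu t0 unfolding M_def by simp
    qed
    have "cc (m-1) = 0" by (rule linpoly_root_bound[OF finFq cardFq Mz]) (use mn in simp)
    moreover have "cc (m-1) = D powi (1 - 2 ^ m) * Ssh C D m"
    proof -
      have i: "m - 1 - (m - 1) = 0" "m - 1 + 1 = m" using mn by simp_all
      show ?thesis unfolding cc_def i by simp
    qed
    moreover have "D powi (1 - 2 ^ m) \<noteq> 0" using D0 by (simp add: power_int_not_zero)
    ultimately have sm: "Ssh C D m = 0" by (metis mult_eq_0_iff)
    have h1: "Ssh C D (m+1) = D * Ssh C D (m-1)^2" using t0 c2eq unfolding tau_def by simp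
    have h2: "Ssh C D (m+1) = C * Ssh C D m ^ 2 + D^2 * Ssh C D (m-1) ^ 4"
      using Ssh_S1[OF two, of C D "Suc n"] mn by (simp add: numeral_eq_Suc)
    have sqf: "(D * y^2)^2 = D^2 * y^4" for y :: 'a
      by (simp add: power_mult_distrib power_mult[symmetric])
    have h3: "Ssh C D (m+1) = (D * Ssh C D (m-1)^2)^2" unfolding sqf using h2 sm by simp
    have "Ssh C D (m+1) = Ssh C D (m+1)^2" using h3 unfolding h1[symmetric] .
    then have "Ssh C D (m+1) = 0 \<or> Ssh C D (m+1) = 1" by (simp add: power2_eq_square)
    moreover have "Ssh C D (m+1) \<noteq> 0" using Ssh_nz[OF D0, of C m] sm by simp
    ultimately have sm1: "Ssh C D (m+1) = 1" by simp
    have m1: "m \<ge> 1" using mn by simp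
    have allz: "\<forall>\<beta>\<in>Fq. (\<Sum>j<m. (Ssh C D (m+1-j))^(2^j) * \<beta>^(2^j)) = 0"
    proof
      fix \<beta> assume bF: "\<beta> \<in> Fq"
      have hb2: "\<beta>^(2^m) = \<beta>" using bF hq Fq_def by simp
      define u where "u = (\<Sum>j<m. (\<beta> * Ssh C D (m-j))^(2^j))"
      have Lu: "L u = 0" unfolding L_def u_def by (rule root_constr(1)[OF two m1 hC2 hD2 hb2 sm sm1])
      have u2: "u^2 = (\<Sum>j<m. (\<beta> * Ssh C D (m+1-j))^(2^j))"
        unfolding u_def by (rule root_constr(2)[OF two m1 hC2 hD2 hb2 sm sm1])
      have "u^(2^m) = (\<Sum>j<m. ((\<beta> * Ssh C D (m-j))^(2^m))^(2^j))"
        unfolding u_def c2_pow2k_sum[OF two] by (simp add: power_mult[symmetric] mult.commute)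
      also have "\<dots> = u" unfolding u_def power_mult_distrib hb2 Ssh_fix[OF hC2 hD2 two] ..
      finally have "u \<in> Fq" unfolding Fq_def using hq by simp
      then have "u = 0" using Lu noroot by blast
      then show "(\<Sum>j<m. (Ssh C D (m+1-j))^(2^j) * \<beta>^(2^j)) = 0"
        using u2 by (simp add: power_mult_distrib mult.commute)
    qed
    have "(Ssh C D (m+1-0))^(2^0) = 0" by (rule linpoly_root_bound[OF finFq cardFq allz]) (use mn in simp)
    then show False using sm1 by simp
  qed
  have tau1: "tau = 1"
  proof -
    have "tau * tau = tau * 1" using tau2 by (simp add: power2_eq_square)
    then show ?thesis using tau0 by simp
  qed
  have PinvP: "Pinv (P x) = x" for x
  proof -
    define u where "u = x^q + x"
    have uF: "u \<in> Fq" unfolding u_def Fq_def using uq by simp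
    have Px: "P x = b * (\<delta> + u)^e + x" unfolding P_def e_def u_def by (simp add: add_ac)
    have "Pinv (P x) = P x + b * (\<delta> + M (L u))^e"
      unfolding Pinv_def M_def cc_def e_def star u_def ..
    also have "\<dots> = x + 2 * (b * (\<delta> + u)^e)" unfolding MLu[OF uF] tau1 Px by (simp add: algebra_simps)
    finally show ?thesis using two by simp
  qed
  show ?thesis
  proof
    fix c
    obtain x where "c = P x" using hperm by (metis bij_pointE)
    then show "P (Pinv c) = c \<and> Pinv (P c) = c" using PinvP by simp
  qed
qed


end
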